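(* Let $n \ge 1$, let $\mathcal{H}$ be a finite-dimensional Hilbert space and let $S$ be any system of the classical-quantum theory. Every leak $l : \mathcal{D}_n \otimes \mathcal{B}(\mathcal{H}) \to \mathcal{D}_n \otimes \mathcal{B}(\mathcal{H}) \otimes S$ for the composite classical-quantum system $\mathcal{D}_n \otimes \mathcal{B}(\mathcal{H})$ is of the form $$ l(|i\rangle\langle i| \otimes \rho) = |i\rangle\langle i| \otimes \rho \otimes \Lambda(|i\rangle\langle i|) \qquad (i = 1,\dots,n,\ \rho \in \mathcal{B}(\mathcal{H})),$$ for some causal (trace-preserving completely positive) process $\Lambda : \mathcal{D}_n \to S$; that is, $l$ copies the classical input, applies $\Lambda$ to one copy to produce the leaked output, and acts as the identity on the quantum input.
   Context: The classical-quantum process theory: systems are finite-dimensional algebras of the form $\mathcal{D}_n \otimes \mathcal{B}(\mathcal{H})$, where $\mathcal{D}_n$ is the algebra of diagonal $n\times n$ complex matrices (an $n$-state classical system, spanned by $|i\rangle\langle i|$) and $\mathcal{H}$ a finite-dimensional Hilbert space (a quantum system); composite systems are tensor products (with $\mathcal{D}_n\otimes\mathcal{D}_m \cong \mathcal{D}_{nm}$). Processes are completely positive maps between these algebras; discarding is the trace (partial trace on a factor), and a process is causal iff it is trace preserving. A leak for a system $A$ is a process $l : A \to A \otimes S$ such that tracing out the $S$ output gives the identity on $A$. *)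

theory Defs
  imports Complex_Main "Jordan_Normal_Form.Matrix" "Jordan_Normal_Form.Conjugate"
begin

(* The system D_m (x) B(C^k) is realised as the algebra of (m*k) x (m*k) complex
   matrices that are block diagonal with respect to the classical index
   (row/column index p encodes (j,b) as p = j*k + b, j<m classical, b<k quantum). *)

definition kron :: "complex mat \<Rightarrow> complex mat \<Rightarrow> complex mat" where
  "kron A B = mat (dim_row A * dim_row B) (dim_col A * dim_col B)
     (\<lambda>(i,j). A $$ (i div dim_row B, j div dim_col B) * B $$ (i mod dim_row B, j mod dim_col B))"

definition mtrace :: "complex mat \<Rightarrow> complex" where
  "mtrace X = (\<Sum>i<dim_row X. X $$ (i,i))"

definition ketbra :: "nat \<Rightarrow> nat \<Rightarrow> complex mat" where
  "ketbra n i = mat n n (\<lambda>(p,q). if p = i \<and> q = i then 1 else 0)"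

definition cq_alg :: "nat \<Rightarrow> nat \<Rightarrow> complex mat set" where
  "cq_alg m k = {X \<in> carrier_mat (m*k) (m*k).
      \<forall>p q. p < m*k \<longrightarrow> q < m*k \<longrightarrow> p div k \<noteq> q div k \<longrightarrow> X $$ (p,q) = 0}"

(* the composite algebra (D_n (x) B(C^d)) (x) (D_m (x) B(C^k)), Kronecker ordering:
   index ((i*d+a)*m + j)*k + b *)
definition cq_comp_alg :: "nat \<Rightarrow> nat \<Rightarrow> nat \<Rightarrow> nat \<Rightarrow> complex mat set" where
  "cq_comp_alg n d m k = {X \<in> carrier_mat (n*d*(m*k)) (n*d*(m*k)).
      \<forall>p q. p < n*d*(m*k) \<longrightarrow> q < n*d*(m*k) \<longrightarrow>
        (p div (d*(m*k)) \<noteq> q div (d*(m*k)) \<or> (p div k) mod m \<noteq> (q div k) mod m)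
        \<longrightarrow> X $$ (p,q) = 0}"

definition psd :: "complex mat \<Rightarrow> bool" where
  "psd X \<longleftrightarrow> square_mat X \<and>
     (\<forall>v \<in> carrier_vec (dim_row X).
        Im (conjugate v \<bullet> (X *\<^sub>v v)) = 0 \<and> 0 \<le> Re (conjugate v \<bullet> (X *\<^sub>v v)))"

definition blk :: "complex mat \<Rightarrow> nat \<Rightarrow> nat \<Rightarrow> nat \<Rightarrow> complex mat" where
  "blk Y N a b = mat N N (\<lambda>(i,j). Y $$ (a*N+i, b*N+j))"

definition amp_alg :: "nat \<Rightarrow> nat \<Rightarrow> complex mat set \<Rightarrow> complex mat set" where
  "amp_alg r N A = {Y \<in> carrier_mat (r*N) (r*N). \<forall>a<r. \<forall>b<r. blk Y N a b \<in> A}"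

definition amplify :: "nat \<Rightarrow> nat \<Rightarrow> nat \<Rightarrow> (complex mat \<Rightarrow> complex mat) \<Rightarrow> complex mat \<Rightarrow> complex mat" where
  "amplify r N M \<Phi> Y = mat (r*M) (r*M) (\<lambda>(p,q). \<Phi> (blk Y N (p div M) (q div M)) $$ (p mod M, q mod M))"

definition lin_on :: "complex mat set \<Rightarrow> (complex mat \<Rightarrow> complex mat) \<Rightarrow> bool" where
  "lin_on A \<Phi> \<longleftrightarrow> (\<forall>x\<in>A. \<forall>y\<in>A. \<Phi> (x + y) = \<Phi> x + \<Phi> y) \<and>
                    (\<forall>c. \<forall>x\<in>A. \<Phi> (c \<cdot>\<^sub>m x) = c \<cdot>\<^sub>m \<Phi> x)"

definition completely_positive ::
  "complex mat set \<Rightarrow> nat \<Rightarrow> nat \<Rightarrow> (complex mat \<Rightarrow> complex mat) \<Rightarrow> bool" where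
  "completely_positive A N M \<Phi> \<longleftrightarrow>
     (\<forall>r Y. Y \<in> amp_alg r N A \<and> psd Y \<longrightarrow> psd (amplify r N M \<Phi> Y))"

definition process ::
  "complex mat set \<Rightarrow> nat \<Rightarrow> complex mat set \<Rightarrow> nat \<Rightarrow> (complex mat \<Rightarrow> complex mat) \<Rightarrow> bool" where
  "process A N B M \<Phi> \<longleftrightarrow> lin_on A \<Phi> \<and> (\<forall>x\<in>A. \<Phi> x \<in> B) \<and> completely_positive A N M \<Phi>"

definition causal :: "complex mat set \<Rightarrow> (complex mat \<Rightarrow> complex mat) \<Rightarrow> bool" where
  "causal A \<Phi> \<longleftrightarrow> (\<forall>x\<in>A. mtrace (\<Phi> x) = mtrace x)"

definition ptrace_S :: "nat \<Rightarrow> nat \<Rightarrow> nat \<Rightarrow> nat \<Rightarrow> complex mat \<Rightarrow> complex mat" where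
  "ptrace_S n d m k X = mat (n*d) (n*d) (\<lambda>(p,q). \<Sum>t<m*k. X $$ (p*(m*k)+t, q*(m*k)+t))"

definition is_leak :: "nat \<Rightarrow> nat \<Rightarrow> nat \<Rightarrow> nat \<Rightarrow> (complex mat \<Rightarrow> complex mat) \<Rightarrow> bool" where
  "is_leak n d m k l \<longleftrightarrow>
     process (cq_alg n d) (n*d) (cq_comp_alg n d m k) (n*d*(m*k)) l \<and>
     (\<forall>x\<in>cq_alg n d. ptrace_S n d m k (l x) = x)"

end

theory Submission
  imports Defs
begin

definition qs :: "nat \<Rightarrow> (nat \<Rightarrow> nat \<Rightarrow> complex) \<Rightarrow> (nat \<Rightarrow> complex) \<Rightarrow> complex" where
  "qs N Z f = (\<Sum>x<N. \<Sum>y<N. cnj (f x) * Z x y * f y)"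

definition pos :: "complex \<Rightarrow> bool" where
  "pos z \<longleftrightarrow> Im z = 0 \<and> 0 \<le> Re z"

definition psdf :: "nat \<Rightarrow> (nat \<Rightarrow> nat \<Rightarrow> complex) \<Rightarrow> bool" where
  "psdf N Z \<longleftrightarrow> (\<forall>f. pos (qs N Z f))"

lemma qf_sum:
  assumes "Z \<in> carrier_mat N N" "v \<in> carrier_vec N"
  shows "conjugate v \<bullet> (Z *\<^sub>v v) = qs N (\<lambda>x y. Z $$ (x,y)) (\<lambda>i. v $ i)"
  using assms unfolding qs_def scalar_prod_def mult_mat_vec_def
  by (auto simp: sum_distrib_left scalar_prod_def atLeast0LessThan mult.assoc intro!: sum.cong)

lemma psd_iff:
  assumes "Z \<in> carrier_mat N N"
  shows "psd Z \<longleftrightarrow> psdf N (\<lambda>x y. Z $$ (x,y))"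
proof
  assume "psd Z"
  show "psdf N (\<lambda>x y. Z $$ (x,y))" unfolding psdf_def
  proof
    fix f :: "nat \<Rightarrow> complex"
    have "vec N f \<in> carrier_vec N" by simp
    then have "pos (conjugate (vec N f) \<bullet> (Z *\<^sub>v vec N f))" using \<open>psd Z\<close> assms
      unfolding psd_def pos_def by auto
    also have "conjugate (vec N f) \<bullet> (Z *\<^sub>v vec N f) = qs N (\<lambda>x y. Z $$ (x,y)) (\<lambda>i. vec N f $ i)"
      by (rule qf_sum[OF assms]) simp
    also have "\<dots> = qs N (\<lambda>x y. Z $$ (x,y)) f" unfolding qs_def by (intro sum.cong) auto
    finally show "pos (qs N (\<lambda>x y. Z $$ (x,y)) f)" .
  qed
next
  assume h: "psdf N (\<lambda>x y. Z $$ (x,y))"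
  show "psd Z" unfolding psd_def
  proof (intro conjI ballI)
    show "square_mat Z" using assms by auto
    fix v :: "complex vec" assume v: "v \<in> carrier_vec (dim_row Z)"
    then have v': "v \<in> carrier_vec N" using assms by auto
    have "pos (conjugate v \<bullet> (Z *\<^sub>v v))" using h qf_sum[OF assms v'] unfolding psdf_def by auto
    then show "Im (conjugate v \<bullet> (Z *\<^sub>v v)) = 0" "0 \<le> Re (conjugate v \<bullet> (Z *\<^sub>v v))"
      unfolding pos_def by auto
  qed
qed

definition bs :: "nat \<Rightarrow> (nat \<Rightarrow> nat \<Rightarrow> complex) \<Rightarrow> (nat \<Rightarrow> complex) \<Rightarrow> (nat \<Rightarrow> complex) \<Rightarrow> complex" where
  "bs N Z f g = (\<Sum>x<N. \<Sum>y<N. cnj (f x) * Z x y * g y)"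

lemma qs_expand:
  "qs N Z (\<lambda>x. c * f x + g x) = cnj c * c * qs N Z f + cnj c * bs N Z f g + c * bs N Z g f + qs N Z g"
  unfolding qs_def bs_def
  by (simp add: algebra_simps sum.distrib sum_distrib_left)

lemma lin_bounded:
  fixes a b :: real
  assumes "\<And>t. 0 \<le> a * t + b" shows "a = 0"
proof (rule ccontr)
  assume "a \<noteq> 0"
  have "0 \<le> a * (-(b+1)/a) + b" by (rule assms)
  with \<open>a \<noteq> 0\<close> show False by (simp add: field_simps)
qed

lemma psdf_zero:
  assumes "psdf N Z" "qs N Z f = 0"
  shows "bs N Z f g = 0 \<and> bs N Z g f = 0"
proof -
  define \<alpha> where "\<alpha> = bs N Z f g"
  define \<beta> where "\<beta> = bs N Z g f"
  define \<gamma> where "\<gamma> = qs N Z g"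
  have P: "pos (cnj c * \<alpha> + c * \<beta> + \<gamma>)" for c
    using assms(1) qs_expand[of N Z c f g] assms(2) unfolding psdf_def \<alpha>_def \<beta>_def \<gamma>_def
    by (metis add.assoc mult_zero_right add_0)
  have g0: "Im \<gamma> = 0" using P[of 0] by (simp add: pos_def)
  have "0 \<le> (Re \<alpha> + Re \<beta>) * t + Re \<gamma>" for t
    using P[of "complex_of_real t"] by (simp add: pos_def algebra_simps)
  then have r1: "Re \<alpha> + Re \<beta> = 0" by (rule lin_bounded)
  have "0 \<le> (Im \<alpha> - Im \<beta>) * t + Re \<gamma>" for t
    using P[of "\<i> * complex_of_real t"] by (simp add: pos_def algebra_simps)
  then have r2: "Im \<alpha> - Im \<beta> = 0" by (rule lin_bounded)
  have r3: "Im \<alpha> + Im \<beta> = 0" using P[of 1] g0 by (simp add: pos_def)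
  have r4: "Re \<beta> - Re \<alpha> = 0" using P[of "\<i>"] g0 by (simp add: pos_def)
  have "\<alpha> = 0" "\<beta> = 0" using r1 r2 r3 r4 by (auto simp: complex_eq_iff)
  then show ?thesis unfolding \<alpha>_def \<beta>_def by auto
qed


lemma sum2_reindex:
  fixes n1 n2 :: nat and h :: "nat \<Rightarrow> nat"
  assumes inj: "inj_on h {..<n1}" and img: "h ` {..<n1} \<subseteq> {..<n2}"
    and z: "\<And>x y. x < n2 \<Longrightarrow> y < n2 \<Longrightarrow> x \<notin> h ` {..<n1} \<or> y \<notin> h ` {..<n1} \<Longrightarrow> T x y = 0"
  shows "(\<Sum>x<n2. \<Sum>y<n2. T x y) = (\<Sum>x<n1. \<Sum>y<n1. T (h x) (h y))"
proof -
  let ?H = "h ` {..<n1}"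
  have "(\<Sum>x<n2. \<Sum>y<n2. T x y) = (\<Sum>x\<in>?H. \<Sum>y<n2. T x y)"
    using img z by (intro sum.mono_neutral_right) auto
  also have "\<dots> = (\<Sum>x\<in>?H. \<Sum>y\<in>?H. T x y)"
  proof (rule sum.cong[OF refl])
    fix x assume "x \<in> ?H"
    show "(\<Sum>y<n2. T x y) = (\<Sum>y\<in>?H. T x y)"
      using img z \<open>x \<in> ?H\<close> by (intro sum.mono_neutral_right) auto
  qed
  also have "\<dots> = (\<Sum>x<n1. \<Sum>y\<in>?H. T (h x) y)"
    by (rule sum.reindex[OF inj, unfolded comp_def])
  also have "\<dots> = (\<Sum>x<n1. \<Sum>y<n1. T (h x) (h y))"
    by (rule sum.cong[OF refl], rule sum.reindex[OF inj, unfolded comp_def])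
  finally show ?thesis .
qed

lemma psdf_compress:
  fixes n1 n2 :: nat and h :: "nat \<Rightarrow> nat"
  assumes "psdf n2 Z2" and inj: "inj_on h {..<n1}" and img: "h ` {..<n1} \<subseteq> {..<n2}"
    and e: "\<And>x y. x < n1 \<Longrightarrow> y < n1 \<Longrightarrow> Z1 x y = Z2 (h x) (h y)"
  shows "psdf n1 Z1"
  unfolding psdf_def
proof
  fix f :: "nat \<Rightarrow> complex"
  define g where "g y = (if y \<in> h ` {..<n1} then f (the_inv_into {..<n1} h y) else 0)" for y
  have gh: "g (h x) = f x" if "x < n1" for x
    using that inj by (auto simp: g_def the_inv_into_f_f)
  have "qs n2 Z2 g = (\<Sum>x<n1. \<Sum>y<n1. cnj (g (h x)) * Z2 (h x) (h y) * g (h y))"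
    unfolding qs_def by (rule sum2_reindex[OF inj img]) (auto simp: g_def)
  also have "\<dots> = qs n1 Z1 f" unfolding qs_def by (intro sum.cong) (auto simp: gh e)
  finally show "pos (qs n1 Z1 f)" using assms(1) unfolding psdf_def by metis
qed

lemma psdf_embed:
  fixes n1 n2 :: nat and h :: "nat \<Rightarrow> nat"
  assumes "psdf n1 Z1" and inj: "inj_on h {..<n1}" and img: "h ` {..<n1} \<subseteq> {..<n2}"
    and e: "\<And>x y. x < n1 \<Longrightarrow> y < n1 \<Longrightarrow> Z1 x y = Z2 (h x) (h y)"
    and z: "\<And>x y. x < n2 \<Longrightarrow> y < n2 \<Longrightarrow> x \<notin> h ` {..<n1} \<or> y \<notin> h ` {..<n1} \<Longrightarrow> Z2 x y = 0"
  shows "psdf n2 Z2"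
  unfolding psdf_def
proof
  fix g :: "nat \<Rightarrow> complex"
  have "qs n2 Z2 g = (\<Sum>x<n1. \<Sum>y<n1. cnj (g (h x)) * Z2 (h x) (h y) * g (h y))"
    unfolding qs_def by (rule sum2_reindex[OF inj img]) (use z in auto)
  also have "\<dots> = qs n1 Z1 (\<lambda>x. g (h x))" unfolding qs_def by (intro sum.cong) (auto simp: e)
  finally show "pos (qs n2 Z2 g)" using assms(1) unfolding psdf_def by metis
qed

lemma pos_sum: "(\<And>j. j \<in> J \<Longrightarrow> pos (F j)) \<Longrightarrow> pos (sum F J)"
  unfolding pos_def by (auto simp: Im_sum Re_sum intro: sum_nonneg)

lemma psdf_sum:
  assumes "\<And>j. j \<in> J \<Longrightarrow> psdf N (W j)"
  shows "psdf N (\<lambda>x y. \<Sum>j\<in>J. W j x y)"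
  unfolding psdf_def
proof
  fix f
  have "qs N (\<lambda>x y. \<Sum>j\<in>J. W j x y) f = (\<Sum>j\<in>J. qs N (W j) f)"
    unfolding qs_def by (simp add: sum_distrib_left sum_distrib_right sum.swap[of _ J])
  also have "pos \<dots>" using assms unfolding psdf_def by (intro pos_sum) auto
  finally show "pos (qs N (\<lambda>x y. \<Sum>j\<in>J. W j x y) f)" .
qed

lemma psdf_rank1: "psdf N (\<lambda>x y. cnj (u x) * u y)"
  unfolding psdf_def
proof
  fix f
  define S where "S = (\<Sum>x<N. u x * f x)"
  have "qs N (\<lambda>x y. cnj (u x) * u y) f = cnj S * S"
    unfolding qs_def S_def by (simp add: sum_distrib_left sum_distrib_right mult_ac)
  moreover have "pos (cnj S * S)" unfolding pos_def
    by (metis complex_mult_cnj mult.commute Im_complex_of_real Re_complex_of_real add_nonneg_nonneg zero_le_power2)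
  ultimately show "pos (qs N (\<lambda>x y. cnj (u x) * u y) f)" by simp
qed

definition dl :: "nat \<Rightarrow> nat \<Rightarrow> complex" where "dl a x = (if x = a then 1 else 0)"

lemma cnj_dl[simp]: "cnj (dl a x) = dl a x" unfolding dl_def by simp

lemma sum_dl_r[simp]: "a < N \<Longrightarrow> (\<Sum>x<N. F x * dl a x) = F a"
proof -
  assume "a < N"
  have "(\<Sum>x<N. F x * dl a x) = (\<Sum>x<N. if x = a then F x else 0)"
    by (intro sum.cong) (auto simp: dl_def)
  then show ?thesis using \<open>a < N\<close> by simp
qed

lemma sum_dl_l[simp]: "a < N \<Longrightarrow> (\<Sum>x<N. dl a x * F x) = F a"
  using sum_dl_r[of a N F] by (simp add: mult.commute)

lemma bs_dl_l: "a < N \<Longrightarrow> bs N Z (dl a) g = (\<Sum>y<N. Z a y * g y)"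
  unfolding bs_def by (simp add: sum.swap[of _ "{..<N}"] mult.assoc sum_distrib_right[symmetric])

lemma bs_dl_r: "a < N \<Longrightarrow> bs N Z g (dl a) = (\<Sum>x<N. cnj (g x) * Z x a)"
  unfolding bs_def by simp

lemma bs_diff_l: "bs N Z (\<lambda>x. f1 x - f2 x) g = bs N Z f1 g - bs N Z f2 g"
  unfolding bs_def by (simp add: algebra_simps sum_subtractf)

lemma bs_diff_r: "bs N Z g (\<lambda>x. f1 x - f2 x) = bs N Z g f1 - bs N Z g f2"
  unfolding bs_def by (simp add: algebra_simps sum_subtractf)

lemma qs_bs: "qs N Z f = bs N Z f f" unfolding qs_def bs_def ..

lemma psdf_diag: "psdf N Z \<Longrightarrow> a < N \<Longrightarrow> pos (Z a a)"
  unfolding psdf_def qs_bs by (metis bs_dl_l sum_dl_r)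

lemma psdf_zero_diag:
  assumes "psdf N Z" "a < N" "y < N" "Z a a = 0"
  shows "Z a y = 0 \<and> Z y a = 0"
proof -
  have "qs N Z (dl a) = 0" using assms by (simp add: qs_bs bs_dl_l)
  from psdf_zero[OF assms(1) this, of "dl y"] assms show ?thesis
    by (simp add: bs_dl_l bs_dl_r)
qed

lemma psdf_diff:
  assumes "psdf N Z" "a < N" "b < N" "y < N" "qs N Z (\<lambda>x. dl a x - dl b x) = 0"
  shows "Z a y = Z b y \<and> Z y a = Z y b"
proof -
  from psdf_zero[OF assms(1) assms(5), of "dl y"] assms show ?thesis
    by (simp add: bs_dl_l bs_dl_r bs_diff_l bs_diff_r)
qed

lemma qs_diff:
  assumes "a < N" "b < N"
  shows "qs N Z (\<lambda>x. dl a x - dl b x) = Z a a - Z a b - Z b a + Z b b"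
  using assms by (simp add: qs_bs bs_diff_l bs_diff_r bs_dl_l bs_dl_r)



lemma psdf_cong: fixes N :: nat shows "(\<And>x y. x < N \<Longrightarrow> y < N \<Longrightarrow> Z x y = Z' x y) \<Longrightarrow> psdf N Z = psdf N Z'"
proof -
  assume h: "\<And>x y. x < N \<Longrightarrow> y < N \<Longrightarrow> Z x y = Z' x y"
  have "qs N Z f = qs N Z' f" for f unfolding qs_def by (intro sum.cong) (auto simp: h)
  then show ?thesis unfolding psdf_def by simp
qed

lemma pos_sum_zero:
  assumes "finite J" "\<And>j. j \<in> J \<Longrightarrow> pos (F j)" "sum F J = 0" "j \<in> J"
  shows "F j = 0"
proof -
  have "Re (sum F J) = 0" using assms by simp
  then have "(\<Sum>j\<in>J. Re (F j)) = 0" by (simp add: Re_sum)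
  then have "\<forall>j\<in>J. Re (F j) = 0" using assms(1,2) by (subst sum_nonneg_eq_0_iff[symmetric]) (auto simp: pos_def)
  then show ?thesis using assms(2,4) by (auto simp: pos_def complex_eq_iff)
qed

lemma idx:
  fixes p t N M :: nat
  assumes "p < N" "t < M"
  shows "p*M+t < N*M" "(p*M+t) div M = p" "(p*M+t) mod M = t"
proof -
  have "p*M + t < p*M + M" using assms by simp
  also have "\<dots> = (p+1)*M" by simp
  also have "\<dots> \<le> N*M" using assms by (intro mult_right_mono) auto
  finally show "p*M+t < N*M" .
  show "(p*M+t) div M = p" "(p*M+t) mod M = t" using assms by auto
qed

locale lk =
  fixes n d m k :: nat and l :: "complex mat \<Rightarrow> complex mat"
  assumes n1: "n \<ge> 1" and d1: "d \<ge> 1" and leak: "is_leak n d m k l"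
begin

abbreviation "N \<equiv> n*d"
abbreviation "MS \<equiv> m*k"
abbreviation "NM \<equiv> n*d*(m*k)"
abbreviation "A \<equiv> cq_alg n d"

definition E :: "nat \<Rightarrow> nat \<Rightarrow> complex mat" where
  "E p q = mat N N (\<lambda>(x,y). if x = p \<and> y = q then 1 else 0)"

lemma lin_add: "x \<in> A \<Longrightarrow> y \<in> A \<Longrightarrow> l (x + y) = l x + l y"
  using leak unfolding is_leak_def process_def lin_on_def by blast
lemma lin_smult: "x \<in> A \<Longrightarrow> l (c \<cdot>\<^sub>m x) = c \<cdot>\<^sub>m l x"
  using leak unfolding is_leak_def process_def lin_on_def by blast
lemma into: "x \<in> A \<Longrightarrow> l x \<in> cq_comp_alg n d m k"
  using leak unfolding is_leak_def process_def by blast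
lemma into_car: "x \<in> A \<Longrightarrow> l x \<in> carrier_mat NM NM"
  using into unfolding cq_comp_alg_def by blast
lemma cp: "Y \<in> amp_alg r N A \<Longrightarrow> psd Y \<Longrightarrow> psd (amplify r N NM l Y)"
  using leak unfolding is_leak_def process_def completely_positive_def by blast
lemma pt: "x \<in> A \<Longrightarrow> ptrace_S n d m k (l x) = x"
  using leak unfolding is_leak_def by blast

lemma E_car[simp]: "E p q \<in> carrier_mat N N" unfolding E_def by simp

lemma E_in: "p < N \<Longrightarrow> q < N \<Longrightarrow> p div d = q div d \<Longrightarrow> E p q \<in> A"
  unfolding E_def cq_alg_def by auto

lemma pt_entry:
  assumes "p < N" "q < N" "p div d = q div d" "r < N" "s < N"
  shows "(\<Sum>t<MS. l (E p q) $$ (r*MS+t, s*MS+t)) = (if r = p \<and> s = q then 1 else 0)"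
proof -
  have "ptrace_S n d m k (l (E p q)) $$ (r,s) = E p q $$ (r,s)" using pt[OF E_in[OF assms(1-3)]] by simp
  then show ?thesis using assms unfolding ptrace_S_def E_def by simp
qed

lemma MS_pos: "0 < MS"
proof (rule ccontr)
  assume "\<not> 0 < MS"
  have "0 < N" using n1 d1 by simp
  from pt_entry[OF this this refl this this] \<open>\<not> 0 < MS\<close> show False by (cases "m = 0") auto
qed

lemma m_pos: "0 < m" and k_pos: "0 < k" using MS_pos by auto

definition W :: "nat \<Rightarrow> nat \<Rightarrow> nat \<Rightarrow> nat \<Rightarrow> complex" where
  "W p q x y = (if x < NM then (if y < NM then l (E p p) $$ (x,y) else l (E p q) $$ (x,y-NM))
      else (if y < NM then l (E q p) $$ (x-NM,y) else l (E q q) $$ (x-NM,y-NM)))"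

lemma W_psd:
  assumes pq: "p < N" "q < N" "p div d = q div d"
  shows "psdf (2*NM) (W p q)"
proof -
  define u where "u x = (if x = p \<or> x = N+q then 1 else 0 :: complex)" for x
  define Y where "Y = mat (2*N) (2*N) (\<lambda>(x,y). cnj (u x) * u y)"
  have u: "u (a*N+i) = (if i = (if a = 0 then p else q) then 1 else 0)" if "a < 2" "i < N" for a i
  proof -
    have "a = 0 \<or> a = 1" using that by auto
    then show ?thesis using that pq by (auto simp: u_def)
  qed
  have blk: "blk Y N a b = E (if a = 0 then p else q) (if b = 0 then p else q)" if "a < 2" "b < 2" for a b
  proof (rule eq_matI)
    fix i j assume "i < dim_row (E (if a = 0 then p else q) (if b = 0 then p else q))"
      "j < dim_col (E (if a = 0 then p else q) (if b = 0 then p else q))"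
    then have ij: "i < N" "j < N" unfolding E_def by auto
    have "a*N+i < 2*N" "b*N+j < 2*N" using that ij idx[of a 2 i N] idx[of b 2 j N] by (auto simp: mult.commute)
    then show "blk Y N a b $$ (i,j) = E (if a = 0 then p else q) (if b = 0 then p else q) $$ (i,j)"
      unfolding blk_def Y_def E_def using ij that by (simp add: u)
  qed (auto simp: blk_def E_def)
  have YA: "Y \<in> amp_alg 2 N A"
    unfolding amp_alg_def
  proof (intro CollectI conjI allI impI)
    show "Y \<in> carrier_mat (2*N) (2*N)" unfolding Y_def by simp
    fix a b assume "a < (2::nat)" "b < (2::nat)"
    then show "blk Y N a b \<in> A" unfolding blk[OF \<open>a<2\<close> \<open>b<2\<close>] using pq by (intro E_in) auto
  qed
  have "psd Y" unfolding psd_iff[of Y "2*N", OF _] 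
    by (subst psd_iff[of Y "2*N"]) (auto simp: Y_def psdf_cong[of "2*N" _ "\<lambda>x y. cnj (u x) * u y"] psdf_rank1)
  from cp[OF YA this] have "psdf (2*NM) (\<lambda>x y. amplify 2 N NM l Y $$ (x,y))"
    by (subst psd_iff[symmetric]) (auto simp: amplify_def)
  moreover have "amplify 2 N NM l Y $$ (x,y) = W p q x y" if "x < 2*NM" "y < 2*NM" for x y
  proof -
    have d: "z div NM = (if z < NM then 0 else 1)" "z mod NM = (if z < NM then z else z - NM)"
      if "z < 2*NM" for z using that n1 d1 m_pos k_pos by (auto simp: div_if mod_if)
    have b00: "blk Y N 0 0 = E p p" and b01: "blk Y N 0 1 = E p q"
      and b10: "blk Y N (Suc 0) 0 = E q p" and b11: "blk Y N (Suc 0) (Suc 0) = E q q"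
      and b01': "blk Y N 0 (Suc 0) = E p q" using blk by auto
    show ?thesis using that unfolding amplify_def W_def
      by (simp add: d[OF that(1)] d[OF that(2)] b00 b01 b01' b10 b11)
  qed
  ultimately show ?thesis by (subst psdf_cong[of "2*NM" _ "\<lambda>x y. amplify 2 N NM l Y $$ (x,y)"]) auto
qed

lemma W_e:
  assumes "x < NM" "y < NM"
  shows "W p q x y = l (E p p) $$ (x,y)" "W p q x (NM+y) = l (E p q) $$ (x,y)"
    "W p q (NM+x) y = l (E q p) $$ (x,y)" "W p q (NM+x) (NM+y) = l (E q q) $$ (x,y)"
  using assms unfolding W_def by auto

lemma diag_pos: "p < N \<Longrightarrow> x < NM \<Longrightarrow> pos (l (E p p) $$ (x,x))"
  using psdf_diag[OF W_psd[of p p], of x] W_e(1)[of x x p p] by simp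

lemma idxN: "p < N \<Longrightarrow> t < MS \<Longrightarrow> p*MS+t < NM" using idx(1)[of p N t MS] by simp

lemma diag0:
  assumes "p < N" "x < NM" "x div MS \<noteq> p"
  shows "l (E p p) $$ (x,x) = 0"
proof -
  define r where "r = x div MS"
  have r: "r < N" unfolding r_def using assms(2) by (simp add: less_mult_imp_div_less)
  have x: "x = r*MS + x mod MS" unfolding r_def by (metis div_mult_mod_eq)
  have tm: "x mod MS < MS" using MS_pos by simp
  have "(\<Sum>t<MS. l (E p p) $$ (r*MS+t, r*MS+t)) = 0"
    using pt_entry[OF assms(1) assms(1) refl r r] assms(3) unfolding r_def by simp
  from pos_sum_zero[OF _ _ this, of "x mod MS"] r tm diag_pos[OF assms(1)] idxN[OF r]
  have "l (E p p) $$ (r*MS + x mod MS, r*MS + x mod MS) = 0" by auto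
  then show ?thesis using x by simp
qed

lemma supp:
  assumes pq: "p < N" "q < N" "p div d = q div d" and xy: "x < NM" "y < NM"
    and ne: "\<not> (x div MS = p \<and> y div MS = q)"
  shows "l (E p q) $$ (x,y) = 0"
proof -
  have P: "psdf (2*NM) (W p q)" by (rule W_psd[OF pq])
  have lt: "x < 2*NM" "NM + y < 2*NM" using xy by linarith+
  show ?thesis
  proof (cases "x div MS = p")
    case False
    then have "W p q x x = 0" using diag0[OF pq(1) xy(1)] W_e(1)[OF xy(1) xy(1)] by simp
    from psdf_zero_diag[OF P lt(1) lt(2) this] show ?thesis using W_e(2)[OF xy] by simp
  next
    case True
    then have "y div MS \<noteq> q" using ne by simp
    then have "W p q (NM+y) (NM+y) = 0" using diag0[OF pq(2) xy(2)] W_e(4)[OF xy(2) xy(2)] by simp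
    from psdf_zero_diag[OF P lt(2) lt(1) this] show ?thesis using W_e(2)[OF xy] by simp
  qed
qed

lemma tau_eq:
  assumes pq: "p < N" "q < N" "p div d = q div d" and st: "s < MS" "t < MS"
  shows "l (E p q) $$ (p*MS+s, q*MS+t) = l (E p p) $$ (p*MS+s, p*MS+t)"
    "l (E p q) $$ (p*MS+s, q*MS+t) = l (E q q) $$ (q*MS+s, q*MS+t)"
proof -
  have P: "psdf (2*NM) (W p q)" by (rule W_psd[OF pq])
  define G where "G t = qs (2*NM) (W p q) (\<lambda>x. dl (p*MS+t) x - dl (NM+(q*MS+t)) x)" for t
  have ia: "p*MS+t < NM" "q*MS+t < NM" if "t < MS" for t using idxN pq that by auto
  have ib: "p*MS+t < 2*NM" "NM+(q*MS+t) < 2*NM" if "t < MS" for t using ia[OF that] by linarith+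
  have G: "G t = l (E p p) $$ (p*MS+t, p*MS+t) - l (E p q) $$ (p*MS+t, q*MS+t)
      - l (E q p) $$ (q*MS+t, p*MS+t) + l (E q q) $$ (q*MS+t, q*MS+t)" if "t < MS" for t
    unfolding G_def using ia[OF that] by (subst qs_diff[OF ib[OF that]]) (simp add: W_e)
  have "(\<Sum>t<MS. G t) = (\<Sum>t<MS. l (E p p) $$ (p*MS+t, p*MS+t) - l (E p q) $$ (p*MS+t, q*MS+t)
      - l (E q p) $$ (q*MS+t, p*MS+t) + l (E q q) $$ (q*MS+t, q*MS+t))"
    by (rule sum.cong) (auto simp: G)
  also have "\<dots> = 0"
    using pt_entry[OF pq(1) pq(1) refl pq(1) pq(1)] pt_entry[OF pq pq(1) pq(2)]
      pt_entry[OF pq(2) pq(1) pq(3)[symmetric] pq(2) pq(1)] pt_entry[OF pq(2) pq(2) refl pq(2) pq(2)]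
    by (simp add: sum.distrib sum_subtractf)
  finally have "(\<Sum>t<MS. G t) = 0" .
  moreover have "pos (G t)" if "t < MS" for t unfolding G_def using P psdf_def by blast
  ultimately have G0: "G t = 0" if "t < MS" for t using pos_sum_zero[of "{..<MS}" G] that by auto
  have D: "W p q a y = W p q b y \<and> W p q y a = W p q y b" if "a < 2*NM" "b < 2*NM" "y < 2*NM"
    "qs (2*NM) (W p q) (\<lambda>x. dl a x - dl b x) = 0" for a b y
    using psdf_diff[OF P that] .
  have "W p q (p*MS+s) (p*MS+t) = W p q (p*MS+s) (NM+(q*MS+t))"
    using D[of "p*MS+t" "NM+(q*MS+t)" "p*MS+s"] G0[OF st(2)] ia ib st unfolding G_def by auto
  then show "l (E p q) $$ (p*MS+s, q*MS+t) = l (E p p) $$ (p*MS+s, p*MS+t)"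
    using ia st by (simp add: W_e)
  have "W p q (p*MS+s) (NM+(q*MS+t)) = W p q (NM+(q*MS+s)) (NM+(q*MS+t))"
    using D[of "p*MS+s" "NM+(q*MS+s)" "NM+(q*MS+t)"] G0[OF st(1)] ia ib st unfolding G_def by auto
  then show "l (E p q) $$ (p*MS+s, q*MS+t) = l (E q q) $$ (q*MS+s, q*MS+t)"
    using ia st by (simp add: W_e)
qed

end

context lk begin

definition sg :: "nat \<Rightarrow> complex mat" where
  "sg i = mat MS MS (\<lambda>(s,t). l (E (i*d) (i*d)) $$ (i*d*MS+s, i*d*MS+t))"

lemma lE:
  assumes pq: "p < N" "q < N" "p div d = q div d" and xy: "x < NM" "y < NM"
  shows "l (E p q) $$ (x,y) = (if x div MS = p \<and> y div MS = q then sg (p div d) $$ (x mod MS, y mod MS) else 0)"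
proof (cases "x div MS = p \<and> y div MS = q")
  case True
  define s where "s = x mod MS"
  define t where "t = y mod MS"
  have st: "s < MS" "t < MS" using MS_pos unfolding s_def t_def by auto
  have x: "x = p*MS+s" "y = q*MS+t" using True unfolding s_def t_def by (metis div_mult_mod_eq)+
  define c where "c = p div d * d"
  have c3: "c \<le> p" unfolding c_def by simp
  have c: "c < N" "c div d = p div d" using pq(1) c3 apply linarith using d1 unfolding c_def by simp
  have "l (E p q) $$ (x,y) = l (E p p) $$ (p*MS+s, p*MS+t)" using tau_eq(1)[OF pq st] x by simp
  also have "\<dots> = l (E p c) $$ (p*MS+s, c*MS+t)" using tau_eq(1)[OF pq(1) c(1) c(2)[symmetric] st] by simp
  also have "\<dots> = l (E c c) $$ (c*MS+s, c*MS+t)" using tau_eq(2)[OF pq(1) c(1) c(2)[symmetric] st] by simp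
  also have "\<dots> = sg (p div d) $$ (s,t)" unfolding sg_def c_def using st by simp
  finally show ?thesis using True s_def t_def by simp
qed (use supp[OF assms] in auto)

definition F :: "complex mat \<Rightarrow> complex mat" where
  "F X = mat NM NM (\<lambda>(x,y). X $$ (x div MS, y div MS) * sg (x div MS div d) $$ (x mod MS, y mod MS))"

lemma divN: "x < NM \<Longrightarrow> x div MS < N" by (simp add: less_mult_imp_div_less)

lemma l_zero: "X \<in> A \<Longrightarrow> l (0\<^sub>m N N) = 0\<^sub>m NM NM"
proof -
  assume X: "X \<in> A"
  have c: "X \<in> carrier_mat N N" using X unfolding cq_alg_def by auto
  have "0\<^sub>m N N = (0::complex) \<cdot>\<^sub>m X" using c by auto
  then have "l (0\<^sub>m N N) = 0 \<cdot>\<^sub>m l X" using lin_smult[OF X] by simp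
  then show ?thesis using into_car[OF X] by auto
qed

lemma l_formula_ind:
  assumes "finite S"
  shows "X \<in> A \<Longrightarrow> (\<forall>p<N. \<forall>q<N. (p,q) \<notin> S \<longrightarrow> X $$ (p,q) = 0) \<Longrightarrow> l X = F X"
  using assms
proof (induction S arbitrary: X rule: finite_induct)
  case empty
  have c: "X \<in> carrier_mat N N" using empty unfolding cq_alg_def by auto
  have "X = 0\<^sub>m N N" using c empty by (intro eq_matI) auto
  then have "l X = 0\<^sub>m NM NM" using l_zero[OF empty(1)] by simp
  also have "\<dots> = F X" unfolding F_def using \<open>X = 0\<^sub>m N N\<close> divN
    by (intro eq_matI) auto
  finally show ?case .
next
  case (insert pq S)
  obtain p q where pq: "pq = (p,q)" by force
  have c: "X \<in> carrier_mat N N" using insert unfolding cq_alg_def by auto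
  define X' where "X' = mat N N (\<lambda>(i,j). if (i,j) = (p,q) then 0 else X $$ (i,j))"
  have X'A: "X' \<in> A" using insert(4) unfolding X'_def cq_alg_def by auto
  have "l X' = F X'" using insert(3)[OF X'A] insert(5) pq unfolding X'_def by auto
  show ?case
  proof (cases "p < N \<and> q < N \<and> p div d = q div d")
    case True
    then have EA: "E p q \<in> A" by (intro E_in) auto
    have X: "X = X' + X $$ (p,q) \<cdot>\<^sub>m E p q" using c True unfolding X'_def E_def
      by (intro eq_matI) auto
    have cEA: "X $$ (p,q) \<cdot>\<^sub>m E p q \<in> A" using True unfolding cq_alg_def E_def by auto
    have "l X = l (X' + X $$ (p,q) \<cdot>\<^sub>m E p q)" using X by metis
    also have "\<dots> = l X' + X $$ (p,q) \<cdot>\<^sub>m l (E p q)"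
      using lin_add[OF X'A cEA] lin_smult[OF EA] by simp
    also have "\<dots> = F X"
      unfolding \<open>l X' = F X'\<close>
    proof (rule eq_matI)
      fix x y assume "x < dim_row (F X)" "y < dim_col (F X)"
      then have xy: "x < NM" "y < NM" unfolding F_def by auto
      show "(F X' + X $$ (p,q) \<cdot>\<^sub>m l (E p q)) $$ (x,y) = F X $$ (x,y)"
        using xy into_car[OF EA] True divN[OF xy(1)] divN[OF xy(2)]
        by (auto simp: F_def X'_def lE)
    qed (use into_car[OF EA] in \<open>auto simp: F_def\<close>)
    finally show ?thesis .
  next
    case False
    have "X' = X" using c False insert(4) unfolding X'_def cq_alg_def by (intro eq_matI) auto
    then show ?thesis using \<open>l X' = F X'\<close> by simp
  qed
qed

lemma l_formula: "X \<in> A \<Longrightarrow> l X = F X"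
  by (rule l_formula_ind[of "{..<N} \<times> {..<N}"]) auto

definition Lam :: "complex mat \<Rightarrow> complex mat" where
  "Lam X = mat MS MS (\<lambda>(s,t). \<Sum>j<n. X $$ (j,j) * sg j $$ (s,t))"

lemma sg_dim[simp]: "dim_row (sg i) = MS" "dim_col (sg i) = MS" unfolding sg_def by auto

lemma Lam_lin: "lin_on (cq_alg n 1) Lam"
  unfolding lin_on_def
proof (intro conjI ballI allI)
  fix x y assume "x \<in> cq_alg n 1" "y \<in> cq_alg n 1"
  then have c: "x \<in> carrier_mat n n" "y \<in> carrier_mat n n" unfolding cq_alg_def by auto
  show "Lam (x + y) = Lam x + Lam y" unfolding Lam_def
    by (rule eq_matI) (use c in \<open>auto simp: sum.distrib distrib_right intro!: sum.cong\<close>)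
next
  fix c :: complex and x assume "x \<in> cq_alg n 1"
  then have cx: "x \<in> carrier_mat n n" unfolding cq_alg_def by auto
  show "Lam (c \<cdot>\<^sub>m x) = c \<cdot>\<^sub>m Lam x" unfolding Lam_def
    by (rule eq_matI) (use cx in \<open>auto simp: sum_distrib_left mult.assoc intro!: sum.cong\<close>)
qed

lemma sg_blk:
  assumes j: "j < n" and st: "s < MS" "t < MS" "s div k \<noteq> t div k"
  shows "sg j $$ (s,t) = 0"
proof -
  define c where "c = j*d"
  have cN: "c < N" using j d1 unfolding c_def by simp
  have EA: "E c c \<in> A" using cN by (intro E_in) auto
  have P: "c*MS+s < NM" "c*MS+t < NM" using idxN[OF cN] st by auto
  have dv: "(c*MS+z) div k = c*m + z div k" for z
  proof -
    have eq: "c*MS+z = z + (c*m)*k" by (simp add: mult_ac)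
    show ?thesis unfolding eq using div_mult_self1[of k z "c*m"] k_pos by simp
  qed
  have lt: "z div k < m" if "z < MS" for z using that by (simp add: less_mult_imp_div_less)
  have md: "((c*MS+z) div k) mod m = z div k" if "z < MS" for z
    unfolding dv using lt[OF that] by simp
  have "l (E c c) $$ (c*MS+s, c*MS+t) = 0"
    using into[OF EA] P md[OF st(1)] md[OF st(2)] st(3) unfolding cq_comp_alg_def by auto
  then show ?thesis unfolding sg_def c_def using st by simp
qed

lemma sg_tr: "j < n \<Longrightarrow> (\<Sum>s<MS. sg j $$ (s,s)) = 1"
proof -
  assume j: "j < n"
  have cN: "j*d < N" using j d1 by simp
  have "(\<Sum>s<MS. sg j $$ (s,s)) = (\<Sum>s<MS. l (E (j*d) (j*d)) $$ (j*d*MS+s, j*d*MS+s))"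
    unfolding sg_def by (rule sum.cong) auto
  also have "\<dots> = 1" using pt_entry[OF cN cN refl cN cN] by simp
  finally show ?thesis .
qed

lemma Lam_into: "x \<in> cq_alg n 1 \<Longrightarrow> Lam x \<in> cq_alg m k"
  unfolding cq_alg_def[of m k] Lam_def using sg_blk by auto

lemma Lam_causal: "causal (cq_alg n 1) Lam"
  unfolding causal_def
proof
  fix x assume "x \<in> cq_alg n 1"
  then have cx: "x \<in> carrier_mat n n" unfolding cq_alg_def by auto
  have "mtrace (Lam x) = (\<Sum>s<MS. \<Sum>j<n. x $$ (j,j) * sg j $$ (s,s))"
    unfolding mtrace_def Lam_def by simp
  also have "\<dots> = (\<Sum>j<n. x $$ (j,j) * (\<Sum>s<MS. sg j $$ (s,s)))"
    by (simp add: sum.swap[of _ "{..<MS}"] sum_distrib_left)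
  also have "\<dots> = mtrace x" unfolding mtrace_def using cx sg_tr by simp
  finally show "mtrace (Lam x) = mtrace x" .
qed

lemma Lam_ketbra: "i < n \<Longrightarrow> Lam (ketbra n i) = sg i"
proof -
  assume i: "i < n"
  have "(\<Sum>j<n. ketbra n i $$ (j,j) * sg j $$ (s,t)) = sg i $$ (s,t)" for s t
  proof -
    have "(\<Sum>j<n. ketbra n i $$ (j,j) * sg j $$ (s,t)) = (\<Sum>j<n. dl i j * sg j $$ (s,t))"
      by (rule sum.cong) (auto simp: ketbra_def dl_def)
    then show ?thesis using i by simp
  qed
  then show ?thesis unfolding Lam_def by (intro eq_matI) (auto simp: sg_def)
qed

lemma divd: "p < N \<Longrightarrow> p div d < n" by (simp add: less_mult_imp_div_less)

lemma final_eq: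
  assumes i: "i < n" and r: "\<rho> \<in> carrier_mat d d"
  shows "l (kron (ketbra n i) \<rho>) = kron (kron (ketbra n i) \<rho>) (Lam (ketbra n i))"
proof -
  have XA: "kron (ketbra n i) \<rho> \<in> A" using r divd unfolding cq_alg_def kron_def ketbra_def by auto
  show ?thesis unfolding l_formula[OF XA] Lam_ketbra[OF i]
  proof (rule eq_matI)
    fix x y assume "x < dim_row (kron (kron (ketbra n i) \<rho>) (sg i))" "y < dim_col (kron (kron (ketbra n i) \<rho>) (sg i))"
    then have xy: "x < NM" "y < NM" using r unfolding kron_def ketbra_def sg_def by auto
    have dx: "x div MS < N" "y div MS < N" using divN xy by auto
    show "F (kron (ketbra n i) \<rho>) $$ (x,y) = kron (kron (ketbra n i) \<rho>) (sg i) $$ (x,y)"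
      using xy dx r divd[OF dx(1)] divd[OF dx(2)] unfolding F_def by (simp add: kron_def ketbra_def)
  qed (use r in \<open>auto simp: F_def kron_def ketbra_def sg_def\<close>)
qed

lemma Wj_psd:
  assumes Ya: "Y \<in> amp_alg r n (cq_alg n 1)" and Yp: "psd Y" and j: "j < n"
  shows "psdf (r*MS) (\<lambda>x y. Y $$ ((x div MS)*n+j, (y div MS)*n+j) * sg j $$ (x mod MS, y mod MS))"
proof -
  have Yc: "Y \<in> carrier_mat (r*n) (r*n)" using Ya unfolding amp_alg_def by auto
  have P1: "psdf (r*n) (\<lambda>x y. Y $$ (x,y))" using Yp psd_iff[OF Yc] by simp
  have P2: "psdf r (\<lambda>a b. Y $$ (a*n+j, b*n+j))"
  proof (rule psdf_compress[OF P1, of "\<lambda>a. a*n+j"])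
    show "inj_on (\<lambda>a. a*n+j) {..<r}" using j by (auto simp: inj_on_def)
    show "(\<lambda>a. a*n+j) ` {..<r} \<subseteq> {..<r*n}" using idx(1)[of _ r j n] j by auto
  qed simp
  have jdN: "j*d < N" using j d1 by simp
  define Y' where "Y' = mat (r*N) (r*N) (\<lambda>(u,v). if u mod N = j*d \<and> v mod N = j*d
      then Y $$ ((u div N)*n+j, (v div N)*n+j) else 0)"
  have P3: "psdf (r*N) (\<lambda>u v. Y' $$ (u,v))"
  proof (rule psdf_embed[OF P2, of "\<lambda>a. a*N + j*d"])
    show "inj_on (\<lambda>a. a*N + j*d) {..<r}" using jdN
      by (auto simp: inj_on_def)
    show img: "(\<lambda>a. a*N + j*d) ` {..<r} \<subseteq> {..<r*N}" using idx(1)[of _ r "j*d" N] jdN by auto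
    fix x y assume "x < r" "y < r"
    then show "Y $$ (x*n+j, y*n+j) = Y' $$ (x*N + j*d, y*N + j*d)"
      unfolding Y'_def using idx[of x r "j*d" N] idx[of y r "j*d" N] jdN by simp
  next
    fix x y assume xy: "x < r*N" "y < r*N"
      and ni: "x \<notin> (\<lambda>a. a*N + j*d) ` {..<r} \<or> y \<notin> (\<lambda>a. a*N + j*d) ` {..<r}"
    have inimg: "z \<in> (\<lambda>a. a*N + j*d) ` {..<r}" if "z < r*N" "z mod N = j*d" for z
    proof
      show "z = z div N * N + j*d" using that(2) by (metis div_mult_mod_eq)
      show "z div N \<in> {..<r}" using that(1) by (simp add: less_mult_imp_div_less)
    qed
    show "Y' $$ (x,y) = 0" using xy ni inimg unfolding Y'_def by auto
  qed
  have Y'c: "Y' \<in> carrier_mat (r*N) (r*N)" unfolding Y'_def by simp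
  have blk': "blk Y' N a b = Y $$ (a*n+j, b*n+j) \<cdot>\<^sub>m E (j*d) (j*d)" if "a < r" "b < r" for a b
  proof (rule eq_matI)
    fix p q assume "p < dim_row (Y $$ (a*n+j, b*n+j) \<cdot>\<^sub>m E (j*d) (j*d))"
      "q < dim_col (Y $$ (a*n+j, b*n+j) \<cdot>\<^sub>m E (j*d) (j*d))"
    then have pq: "p < N" "q < N" by (auto simp: E_def)
    show "blk Y' N a b $$ (p,q) = (Y $$ (a*n+j, b*n+j) \<cdot>\<^sub>m E (j*d) (j*d)) $$ (p,q)"
      unfolding blk_def Y'_def E_def
      using idx[of a r p N] idx[of b r q N] that pq by auto
  qed (auto simp: blk_def E_def)
  have Y'A: "Y' \<in> amp_alg r N A"
    unfolding amp_alg_def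
  proof (intro CollectI conjI allI impI Y'c)
    fix a b assume ab: "a < r" "b < r"
    show "blk Y' N a b \<in> A" unfolding blk'[OF ab] cq_alg_def E_def by auto
  qed
  have "psd Y'" using P3 psd_iff[OF Y'c] by simp
  from cp[OF Y'A this] have P4: "psdf (r*NM) (\<lambda>u v. amplify r N NM l Y' $$ (u,v))"
    by (subst psd_iff[symmetric]) (auto simp: amplify_def)
  define h where "h x = (x div MS)*NM + (j*d*MS + x mod MS)" for x
  have inner: "j*d*MS + x mod MS < NM" for x using idxN[OF jdN, of "x mod MS"] MS_pos by simp
  have hdiv: "h x div NM = x div MS" "h x mod NM = j*d*MS + x mod MS" if "x < r*MS" for x
    using idx[of "x div MS" r "j*d*MS + x mod MS" NM] inner that unfolding h_def
    by (auto simp: less_mult_imp_div_less)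
  show ?thesis
  proof (rule psdf_compress[OF P4, of h])
    show "inj_on h {..<r*MS}"
    proof (rule inj_onI)
      fix x y assume "x \<in> {..<r*MS}" "y \<in> {..<r*MS}" "h x = h y"
      then have "x div MS = y div MS" "j*d*MS + x mod MS = j*d*MS + y mod MS" using hdiv by (metis lessThan_iff)+
      then show "x = y" by (metis add_left_cancel div_mult_mod_eq)
    qed
    show "h ` {..<r*MS} \<subseteq> {..<r*NM}"
      using idx(1)[of _ r "j*d*MS + _ mod MS" NM] inner unfolding h_def
      by (auto simp: less_mult_imp_div_less)
    fix x y assume xy: "x < r*MS" "y < r*MS"
    have a: "x div MS < r" "y div MS < r" using xy by (auto simp: less_mult_imp_div_less)
    have hl: "h x < r*NM" "h y < r*NM" using idx(1)[of _ r "j*d*MS + _ mod MS" NM] inner a unfolding h_def by auto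
    have EA: "E (j*d) (j*d) \<in> A" using jdN by (intro E_in) auto
    have "amplify r N NM l Y' $$ (h x, h y) = l (blk Y' N (x div MS) (y div MS)) $$ (j*d*MS + x mod MS, j*d*MS + y mod MS)"
      unfolding amplify_def using hl hdiv xy by simp
    also have "\<dots> = Y $$ (x div MS*n+j, y div MS*n+j) * l (E (j*d) (j*d)) $$ (j*d*MS + x mod MS, j*d*MS + y mod MS)"
      unfolding blk'[OF a] lin_smult[OF EA] using into_car[OF EA] inner by simp
    also have "\<dots> = Y $$ (x div MS*n+j, y div MS*n+j) * sg j $$ (x mod MS, y mod MS)"
      unfolding sg_def using MS_pos by simp
    finally show "Y $$ (x div MS*n+j, y div MS*n+j) * sg j $$ (x mod MS, y mod MS) = amplify r N NM l Y' $$ (h x, h y)" by simp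
  qed
qed

lemma Lam_cp: "completely_positive (cq_alg n 1) n (m*k) Lam"
  unfolding completely_positive_def
proof (intro allI impI, elim conjE)
  fix r Y assume Ya: "Y \<in> amp_alg r n (cq_alg n 1)" and Yp: "psd Y"
  have Zc: "amplify r n MS Lam Y \<in> carrier_mat (r*MS) (r*MS)" unfolding amplify_def by simp
  have S: "psdf (r*MS) (\<lambda>x y. \<Sum>j\<in>{..<n}. Y $$ ((x div MS)*n+j, (y div MS)*n+j) * sg j $$ (x mod MS, y mod MS))"
    by (rule psdf_sum) (use Wj_psd[OF Ya Yp] in auto)
  have "amplify r n MS Lam Y $$ (x,y) = (\<Sum>j\<in>{..<n}. Y $$ ((x div MS)*n+j, (y div MS)*n+j) * sg j $$ (x mod MS, y mod MS))"
    if "x < r*MS" "y < r*MS" for x y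
    using that MS_pos unfolding amplify_def Lam_def blk_def by simp
  then have "psdf (r*MS) (\<lambda>x y. amplify r n MS Lam Y $$ (x,y))"
    using S by (subst psdf_cong) auto
  then show "psd (amplify r n (m*k) Lam Y)" using psd_iff[OF Zc] by simp
qed

lemma main: "\<exists>\<Lambda>. process (cq_alg n 1) n (cq_alg m k) (m*k) \<Lambda> \<and> causal (cq_alg n 1) \<Lambda> \<and>
           (\<forall>i<n. \<forall>\<rho>\<in>carrier_mat d d.
              l (kron (ketbra n i) \<rho>) = kron (kron (ketbra n i) \<rho>) (\<Lambda> (ketbra n i)))"
  using Lam_lin Lam_into Lam_causal Lam_cp final_eq unfolding process_def by blast

end

theorem proposition5:
  fixes n d m k :: nat and l :: "complex mat \<Rightarrow> complex mat"
  assumes "n \<ge> 1" and "d \<ge> 1"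
    and "is_leak n d m k l"
  shows "\<exists>\<Lambda>. process (cq_alg n 1) n (cq_alg m k) (m*k) \<Lambda> \<and> causal (cq_alg n 1) \<Lambda> \<and>
           (\<forall>i<n. \<forall>\<rho>\<in>carrier_mat d d.
              l (kron (ketbra n i) \<rho>) = kron (kron (ketbra n i) \<rho>) (\<Lambda> (ketbra n i)))"
proof -
  interpret lk n d m k l using assms by unfold_locales
  show ?thesis by (rule main)
qed


end
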